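(* Let $K_1,K_2,K_3>0$ and $t\ge 0$. For $\alpha>0$ put $$F_\alpha(v):=\int_0^\alpha f(v)\,v'^2-g(v)+K_2t^2\,dz,\qquad \mathcal{A}_\alpha:=\left\{v\in W^{1,2}(0,\alpha)\ :\ v(0)=0,\ v(\alpha)=\tfrac{\pi}{2}\right\},$$ where $f(v)=K_1\cos^2 v+K_3\sin^2 v$ and $g(v)=\dfrac{K_2^2t^2\cos^2 v}{K_2\cos^2 v+K_3\sin^2 v}$. If $0<\alpha<\beta<\infty$, then $$\inf_{v\in\mathcal{A}_\alpha}F_\alpha(v)>\inf_{w\in\mathcal{A}_\beta}F_\beta(w).$$
   Context: Functions in $W^{1,2}(0,\alpha)$ are real-valued. *)

theory Defs
  imports "HOL-Analysis.Analysis"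
begin

text \<open>W^{1,2}(0,a) in one dimension, represented by its (absolutely) continuous
  representative v on [0,a] together with a weak derivative w in L^2(0,a):
  v(x) = v(0) + integral of w over [0,x].\<close>
definition W12_pair :: "real \<Rightarrow> (real \<Rightarrow> real) \<Rightarrow> (real \<Rightarrow> real) \<Rightarrow> bool" where
  "W12_pair a v w \<longleftrightarrow>
     continuous_on {0..a} v \<and>
     w \<in> borel_measurable lborel \<and>
     set_integrable lborel {0..a} w \<and>
     set_integrable lborel {0..a} (\<lambda>x. (w x)\<^sup>2) \<and>
     (\<forall>x\<in>{0..a}. v x = v 0 + (LINT y:{0..x}|lborel. w y))"

definition f_coef :: "real \<Rightarrow> real \<Rightarrow> real \<Rightarrow> real" where
  "f_coef K1 K3 s = K1 * (cos s)\<^sup>2 + K3 * (sin s)\<^sup>2"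

definition g_coef :: "real \<Rightarrow> real \<Rightarrow> real \<Rightarrow> real \<Rightarrow> real" where
  "g_coef K2 K3 t s = (K2\<^sup>2 * t\<^sup>2 * (cos s)\<^sup>2) / (K2 * (cos s)\<^sup>2 + K3 * (sin s)\<^sup>2)"

definition F_energy :: "real \<Rightarrow> real \<Rightarrow> real \<Rightarrow> real \<Rightarrow> real \<Rightarrow> (real \<Rightarrow> real) \<Rightarrow> (real \<Rightarrow> real) \<Rightarrow> real" where
  "F_energy K1 K2 K3 t a v w =
     (LINT z:{0..a}|lborel. f_coef K1 K3 (v z) * (w z)\<^sup>2 - g_coef K2 K3 t (v z) + K2 * t\<^sup>2)"

definition admissible :: "real \<Rightarrow> ((real \<Rightarrow> real) \<times> (real \<Rightarrow> real)) set" where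
  "admissible a = {(v, w). W12_pair a v w \<and> v 0 = 0 \<and> v a = pi / 2}"

definition inf_energy :: "real \<Rightarrow> real \<Rightarrow> real \<Rightarrow> real \<Rightarrow> real \<Rightarrow> real" where
  "inf_energy K1 K2 K3 t a = Inf ((\<lambda>(v, w). F_energy K1 K2 K3 t a v w) ` admissible a)"

end

theory Submission
  imports Defs
begin


lemma chain_ineq:
  fixes v w \<phi> \<Phi> :: "real \<Rightarrow> real"
  assumes a: "0 \<le> a"
    and vc: "continuous_on {0..a} v"
    and wi: "w absolutely_integrable_on {0..a}"
    and vw: "\<And>x. x \<in> {0..a} \<Longrightarrow> v x = v 0 + integral {0..x} w"
    and \<phi>c: "continuous_on {m..M} \<phi>"
    and \<phi>pos: "\<And>s. s \<in> {m..M} \<Longrightarrow> 0 \<le> \<phi> s"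
    and rng: "v ` {0..a} \<subseteq> {m..M}"
    and \<Phi>d: "\<And>s. s \<in> {m..M} \<Longrightarrow> (\<Phi> has_real_derivative \<phi> s) (at s within {m..M})"
  shows "\<Phi> (v a) - \<Phi> (v 0) \<le> integral {0..a} (\<lambda>x. \<phi> (v x) * \<bar>w x\<bar>)"
proof -
  have \<psi>c: "continuous_on {0..a} (\<lambda>x. \<phi> (v x))"
    using continuous_on_compose2[OF \<phi>c vc rng] .
  have awi: "(\<lambda>x. \<bar>w x\<bar>) absolutely_integrable_on {0..a}"
    using absolutely_integrable_norm[OF wi] by (simp add: o_def)
  have prodi: "(\<lambda>x. (\<phi> (v x) + c) * \<bar>w x\<bar>) absolutely_integrable_on {0..a}" for c
  proof (rule absolutely_integrable_bounded_measurable_product_real[OF _ _ _ awi])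
    have "continuous_on {0..a} (\<lambda>x. \<phi> (v x) + c)" using \<psi>c by (intro continuous_intros)
    then show "(\<lambda>x. \<phi> (v x) + c) \<in> borel_measurable (lebesgue_on {0..a})"
      by (rule continuous_imp_measurable_on_sets_lebesgue) simp
    show "bounded ((\<lambda>x. \<phi> (v x) + c) ` {0..a})"
      by (rule compact_imp_bounded[OF compact_continuous_image[OF _ compact_Icc]])
         (use \<psi>c in \<open>intro continuous_intros\<close>)
  qed simp
  have prodI: "(\<lambda>x. (\<phi> (v x) + c) * \<bar>w x\<bar>) integrable_on {x..y}" if "{x..y} \<subseteq> {0..a}" for c x y
    using integrable_on_subinterval[OF set_lebesgue_integral_eq_integral(1)[OF prodi] that] .
  have awI: "(\<lambda>x. \<bar>w x\<bar>) integrable_on {x..y}" if "{x..y} \<subseteq> {0..a}" for x y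
    using integrable_on_subinterval[OF set_lebesgue_integral_eq_integral(1)[OF awi] that] .
  have wI: "w integrable_on {x..y}" if "{x..y} \<subseteq> {0..a}" for x y
    using integrable_on_subinterval[OF set_lebesgue_integral_eq_integral(1)[OF wi] that] .
  have main: "\<Phi> (v a) - \<Phi> (v 0) \<le> integral {0..a} (\<lambda>x. \<phi> (v x) * \<bar>w x\<bar>) + e * integral {0..a} (\<lambda>x. \<bar>w x\<bar>)"
    if e: "e > 0" for e
  proof -
    obtain d where d: "d > 0" and dd: "\<And>x y. x \<in> {0..a} \<Longrightarrow> y \<in> {0..a} \<Longrightarrow> dist y x < d \<Longrightarrow> dist (\<phi> (v y)) (\<phi> (v x)) < e"
      using compact_uniformly_continuous[OF \<psi>c compact_Icc] e unfolding uniformly_continuous_on_def by metis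
    define F where "F r = (\<phi> (v r) + e) * \<bar>w r\<bar>" for r
    define P where "P x = integral {0..x} F - (\<Phi> (v x) - \<Phi> (v 0))" for x
    have step: "P x \<le> P y" if xy: "0 \<le> x" "x \<le> y" "y \<le> a" "y - x < d" for x y
    proof -
      have sub: "{x..y} \<subseteq> {0..a}" using xy by auto
      have I1: "integral {0..y} F = integral {0..x} F + integral {x..y} F"
        using Henstock_Kurzweil_Integration.integral_combine[where a=0 and c=x and b=y and f=F] prodI[of 0 y e] xy unfolding F_def by auto
      have "integral {0..y} w = integral {0..x} w + integral {x..y} w"
        using Henstock_Kurzweil_Integration.integral_combine[where a=0 and c=x and b=y and f=w] wI[of 0 y] xy by auto
      then have vxy: "v y - v x = integral {x..y} w" using vw[of x] vw[of y] xy by auto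
      have absb: "\<bar>v y - v x\<bar> \<le> integral {x..y} (\<lambda>r. \<bar>w r\<bar>)"
        unfolding vxy using integral_norm_bound_integral[OF wI[OF sub] awI[OF sub]]
        by auto
      have vxm: "v x \<in> {m..M}" "v y \<in> {m..M}" using rng xy by (auto simp: image_subset_iff)
      have vcxy: "continuous_on {x..y} v" using continuous_on_subset[OF vc sub] .
      obtain s where s: "s \<in> {x..y}" and sE: "\<Phi> (v y) - \<Phi> (v x) = \<phi> (v s) * (v y - v x)"
      proof (cases "v x \<le> v y")
        case True
        have "\<exists>c\<in>{v x..v y}. \<Phi> (v y) - \<Phi> (v x) = (*) (\<phi> c) (v y - v x)"
        proof (rule mvt_very_simple[OF True])
          fix c assume c: "v x \<le> c" "c \<le> v y"
          then have "c \<in> {m..M}" using vxm by auto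
          then have "(\<Phi> has_real_derivative \<phi> c) (at c within {v x..v y})"
            by (rule has_field_derivative_subset[OF \<Phi>d]) (use vxm in auto)
          then show "(\<Phi> has_derivative (*) (\<phi> c)) (at c within {v x..v y})"
            by (simp add: has_field_derivative_def)
        qed
        then obtain c where c: "v x \<le> c" "c \<le> v y" "\<Phi> (v y) - \<Phi> (v x) = \<phi> c * (v y - v x)" by auto
        obtain s where "x \<le> s" "s \<le> y" "v s = c" using IVT'[of v x c y, OF c(1,2) _ vcxy] xy by auto
        then show ?thesis using that c by auto
      next
        case False
        then have F: "v y \<le> v x" by simp
        have "\<exists>c\<in>{v y..v x}. \<Phi> (v x) - \<Phi> (v y) = (*) (\<phi> c) (v x - v y)"
        proof (rule mvt_very_simple[OF F])
          fix c assume c: "v y \<le> c" "c \<le> v x"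
          then have "c \<in> {m..M}" using vxm by auto
          then have "(\<Phi> has_real_derivative \<phi> c) (at c within {v y..v x})"
            by (rule has_field_derivative_subset[OF \<Phi>d]) (use vxm in auto)
          then show "(\<Phi> has_derivative (*) (\<phi> c)) (at c within {v y..v x})"
            by (simp add: has_field_derivative_def)
        qed
        then obtain c where c: "v y \<le> c" "c \<le> v x" "\<Phi> (v x) - \<Phi> (v y) = \<phi> c * (v x - v y)" by auto
        obtain s where "x \<le> s" "s \<le> y" "v s = c" using IVT2'[of v y c x, OF c(1,2) _ vcxy] xy by auto
        then show ?thesis using that[of s] c by (auto simp: algebra_simps)
      qed
      have \<phi>s: "0 \<le> \<phi> (v s)" using \<phi>pos rng s sub by (auto simp: image_subset_iff)
      have le: "\<phi> (v s) * \<bar>w r\<bar> \<le> F r" if r: "r \<in> {x..y}" for r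
      proof -
        have "dist r s < d" using r s xy by (auto simp: dist_real_def)
        then have "dist (\<phi> (v r)) (\<phi> (v s)) < e" using dd[of s r] r s sub by auto
        then have "\<phi> (v s) \<le> \<phi> (v r) + e" by (auto simp: dist_real_def)
        then show ?thesis unfolding F_def by (intro mult_right_mono) auto
      qed
      have "\<Phi> (v y) - \<Phi> (v x) \<le> \<phi> (v s) * \<bar>v y - v x\<bar>"
        unfolding sE using \<phi>s by (intro mult_left_mono) auto
      also have "\<dots> \<le> \<phi> (v s) * integral {x..y} (\<lambda>r. \<bar>w r\<bar>)"
        using absb \<phi>s by (intro mult_left_mono) auto
      also have "\<dots> = integral {x..y} (\<lambda>r. \<phi> (v s) * \<bar>w r\<bar>)" by simp
      also have "\<dots> \<le> integral {x..y} F"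
        using le prodI[OF sub, of e] integrable_on_mult_right[OF awI[OF sub]]
        unfolding F_def by (intro integral_le) auto
      finally show ?thesis unfolding P_def using I1 by simp
    qed
    have ind: "\<forall>x. 0 \<le> x \<and> x \<le> a \<and> x \<le> real n * (d/2) \<longrightarrow> 0 \<le> P x" for n :: nat
    proof (induction n)
      case 0
      then show ?case by (auto simp: P_def)
    next
      case (Suc n)
      show ?case
      proof (intro allI impI)
        fix x assume x: "0 \<le> x \<and> x \<le> a \<and> x \<le> real (Suc n) * (d / 2)"
        show "0 \<le> P x"
        proof (cases "x \<le> real n * (d/2)")
          case True then show ?thesis using Suc x by auto
        next
          case False
          let ?x = "real n * (d/2)"
          have "0 \<le> P ?x" using Suc x False d by auto
          also have "P ?x \<le> P x" using x False d by (intro step) (auto simp: algebra_simps)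
          finally show ?thesis .
        qed
      qed
    qed
    obtain n :: nat where n: "a / (d/2) < real n" using reals_Archimedean2 by blast
    then have "a \<le> real n * (d/2)" using d by (simp add: field_simps)
    then have "0 \<le> P a" using ind[of n] a by auto
    moreover have "integral {0..a} F = integral {0..a} (\<lambda>x. \<phi> (v x) * \<bar>w x\<bar>) + e * integral {0..a} (\<lambda>x. \<bar>w x\<bar>)"
    proof -
      have "integral {0..a} F = integral {0..a} (\<lambda>x. \<phi> (v x) * \<bar>w x\<bar> + e * \<bar>w x\<bar>)"
        unfolding F_def by (simp add: algebra_simps)
      also have "\<dots> = integral {0..a} (\<lambda>x. \<phi> (v x) * \<bar>w x\<bar>) + integral {0..a} (\<lambda>x. e * \<bar>w x\<bar>)"
        using prodI[of 0 a 0] integrable_on_mult_right[OF awI[of 0 a]] by (intro integral_add) auto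
      finally show ?thesis by simp
    qed
    ultimately show ?thesis unfolding P_def by simp
  qed
  have C: "0 \<le> integral {0..a} (\<lambda>x. \<bar>w x\<bar>)"
    using awI[of 0 a] by (intro integral_nonneg) auto
  show ?thesis
  proof (rule ccontr)
    let ?A = "\<Phi> (v a) - \<Phi> (v 0)" and ?B = "integral {0..a} (\<lambda>x. \<phi> (v x) * \<bar>w x\<bar>)"
      and ?C = "integral {0..a} (\<lambda>x. \<bar>w x\<bar>)"
    assume "\<not> ?A \<le> ?B"
    then have pos: "?A - ?B > 0" by simp
    define e where "e = (?A - ?B) / (?C + 1)"
    have e: "e > 0" using pos C unfolding e_def by simp
    have "e * ?C < ?A - ?B"
    proof -
      have "e * ?C = (?A - ?B) * (?C / (?C + 1))" unfolding e_def by simp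
      also have "\<dots> < (?A - ?B) * 1" using pos C by (intro mult_strict_left_mono) auto
      finally show ?thesis by simp
    qed
    then show False using main[OF e] by simp
  qed
qed



locale LC =
  fixes K1 K2 K3 t :: real
  assumes K1: "K1 > 0" and K2: "K2 > 0" and K3: "K3 > 0" and t: "t \<ge> 0"
begin

definition den where "den s = K2 * (cos s)\<^sup>2 + K3 * (sin s)\<^sup>2"
definition ff where "ff s = f_coef K1 K3 s"
definition hh where "hh s = K2 * t\<^sup>2 - g_coef K2 K3 t s"
definition phi where "phi \<mu> s = sqrt (ff s) * sqrt (hh s + \<mu>)"
definition pp where "pp \<mu> s = sqrt (ff s) / sqrt (hh s + \<mu>)"
definition TT where "TT \<mu> = integral {0..pi/2} (pp \<mu>)"
definition II where "II \<mu> = integral {0..pi/2} (phi \<mu>)"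

lemma den_ge: "den s \<ge> min K2 K3"
proof -
  have "min K2 K3 = min K2 K3 * ((cos s)\<^sup>2 + (sin s)\<^sup>2)" by simp
  also have "\<dots> \<le> den s" unfolding den_def distrib_left
    by (intro add_mono mult_right_mono) auto
  finally show ?thesis .
qed

lemma den_pos: "den s > 0"
  using den_ge[of s] K2 K3 by linarith

lemma ff_ge: "ff s \<ge> min K1 K3"
proof -
  have "min K1 K3 = min K1 K3 * ((cos s)\<^sup>2 + (sin s)\<^sup>2)" by simp
  also have "\<dots> \<le> ff s" unfolding ff_def f_coef_def distrib_left
    by (intro add_mono mult_right_mono) auto
  finally show ?thesis .
qed

lemma ff_pos: "ff s > 0"
  using ff_ge[of s] K1 K3 by linarith

lemma ff_le: "ff s \<le> K1 + K3"
  unfolding ff_def f_coef_def using K1 K3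
  by (intro add_mono) (auto intro!: mult_left_le simp: abs_square_le_1)

lemma hh_eq: "hh s = K2 * K3 * t\<^sup>2 * (sin s)\<^sup>2 / den s"
proof -
  have d: "den s \<noteq> 0" using den_pos[of s] by simp
  have "hh s = (K2 * t\<^sup>2 * den s - K2\<^sup>2 * t\<^sup>2 * (cos s)\<^sup>2) / den s"
    unfolding hh_def g_coef_def den_def[symmetric] using d by (simp add: field_simps)
  also have "K2 * t\<^sup>2 * den s - K2\<^sup>2 * t\<^sup>2 * (cos s)\<^sup>2 = K2 * K3 * t\<^sup>2 * (sin s)\<^sup>2"
    unfolding den_def by (simp add: algebra_simps power2_eq_square)
  finally show ?thesis .
qed

lemma hh_nonneg: "hh s \<ge> 0"
  unfolding hh_eq using den_pos[of s] K2 K3 by simp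

lemma g_nonneg: "g_coef K2 K3 t s \<ge> 0"
  unfolding g_coef_def den_def[symmetric] using den_pos[of s] by simp

lemma hh_le: "hh s \<le> K2 * t\<^sup>2"
  unfolding hh_def using g_nonneg[of s] by simp

definition CC where "CC = K2 * K3 * t\<^sup>2 / min K2 K3 + 1"

lemma CC_pos: "CC > 0"
proof -
  have "K2 * K3 * t\<^sup>2 / min K2 K3 \<ge> 0" using K2 K3 by simp
  then show ?thesis unfolding CC_def by linarith
qed

lemma hh_quad: "hh s \<le> CC * s\<^sup>2"
proof -
  have m: "min K2 K3 > 0" using K2 K3 by simp
  have A: "K2 * K3 * t\<^sup>2 \<ge> 0" using K2 K3 by simp
  have "hh s \<le> K2 * K3 * t\<^sup>2 * (sin s)\<^sup>2 / min K2 K3"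
    unfolding hh_eq using den_ge[of s] m A by (intro divide_left_mono) auto
  also have "\<dots> \<le> K2 * K3 * t\<^sup>2 * s\<^sup>2 / min K2 K3"
    using A m abs_sin_x_le_abs_x[of s]
    by (intro divide_right_mono mult_left_mono) (auto simp: abs_le_square_iff)
  also have "\<dots> \<le> CC * s\<^sup>2" unfolding CC_def by (simp add: algebra_simps)
  finally show ?thesis .
qed

lemma cont_den[continuous_intros]: "continuous_on S den"
  unfolding den_def by (intro continuous_intros)

lemma cont_ff[continuous_intros]: "continuous_on S ff"
  unfolding ff_def f_coef_def by (intro continuous_intros)

lemma cont_hh[continuous_intros]: "continuous_on S hh"
  unfolding hh_def g_coef_def den_def[symmetric]
  using den_pos by (intro continuous_intros) (auto simp: less_imp_neq[symmetric])

lemma cont_hh_comp: "continuous_on S f \<Longrightarrow> continuous_on S (\<lambda>x. hh (f x))"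
  by (rule continuous_on_compose2[OF cont_hh[of UNIV]]) auto
lemma cont_ff_comp: "continuous_on S f \<Longrightarrow> continuous_on S (\<lambda>x. ff (f x))"
  by (rule continuous_on_compose2[OF cont_ff[of UNIV]]) auto

lemma cont_phi[continuous_intros]: "\<mu> \<ge> 0 \<Longrightarrow> continuous_on S (phi \<mu>)"
  unfolding phi_def by (intro continuous_intros)

lemma cont_pp[continuous_intros]: "\<mu> > 0 \<Longrightarrow> continuous_on S (pp \<mu>)"
  unfolding pp_def using hh_nonneg
  by (intro continuous_intros) (auto simp: add_nonneg_pos less_imp_neq[symmetric])

lemma phi_nonneg: "\<mu> \<ge> 0 \<Longrightarrow> phi \<mu> s \<ge> 0"
  unfolding phi_def using hh_nonneg[of s] ff_pos[of s] by simp

lemma pp_pos: "\<mu> > 0 \<Longrightarrow> pp \<mu> s > 0"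
  unfolding pp_def using ff_pos[of s] hh_nonneg[of s] by simp

end


lemma lborel_abs:
  fixes f :: "real \<Rightarrow> real"
  assumes "set_integrable lborel S f"
  shows "f absolutely_integrable_on S"
proof -
  have i: "integrable lborel (\<lambda>x. indicator S x *\<^sub>R f x)" using assms unfolding set_integrable_def .
  show ?thesis unfolding set_integrable_def
    using integrable_completion[OF borel_measurable_integrable[OF i]] i by simp
qed

lemma lborel_conv:
  fixes f :: "real \<Rightarrow> real"
  assumes "set_integrable lborel {a..b} f" "a \<le> x" "x \<le> b"
  shows "(LINT y:{a..x}|lborel. f y) = integral {a..x} f"
proof -
  have "set_integrable lborel {a..x} f"
    by (rule set_integrable_subset[OF assms(1)]) (use assms in auto)
  then show ?thesis by (rule set_borel_integral_eq_integral(2))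
qed

lemma indicator_cont_meas:
  fixes u :: "real \<Rightarrow> real"
  assumes "continuous_on {a..b} u"
  shows "(\<lambda>x. indicator {a..b} x * u x) \<in> borel_measurable lborel"
  using borel_measurable_continuous_on_indicator[of "{a..b}" u] assms by simp

context LC begin

lemma LB:
  assumes adm: "(v, w) \<in> admissible a" and a: "a > 0" and \<mu>: "\<mu> > 0"
  shows "F_energy K1 K2 K3 t a v w \<ge> 2 * II \<mu> - \<mu> * a"
proof -
  have adm': "W12_pair a v w \<and> v 0 = 0 \<and> v a = pi/2"
    using adm unfolding admissible_def by simp
  then have W: "W12_pair a v w" and v0: "v 0 = 0" and va: "v a = pi/2" by blast+
  from W have vc: "continuous_on {0..a} v" and wm: "w \<in> borel_measurable lborel"
    and wint: "set_integrable lborel {0..a} w" and w2int: "set_integrable lborel {0..a} (\<lambda>x. (w x)\<^sup>2)"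
    and vwL: "\<And>x. x \<in> {0..a} \<Longrightarrow> v x = v 0 + (LINT y:{0..x}|lborel. w y)"
    unfolding W12_pair_def by blast+
  have vw: "v x = v 0 + integral {0..x} w" if "x \<in> {0..a}" for x
    using vwL[OF that] lborel_conv[OF wint, of x] that by auto
  have wi: "w absolutely_integrable_on {0..a}" using lborel_abs[OF wint] .
  define E where "E z = f_coef K1 K3 (v z) * (w z)\<^sup>2 - g_coef K2 K3 t (v z) + K2 * t\<^sup>2" for z
  have E_eq: "E z = ff (v z) * (w z)\<^sup>2 + hh (v z)" for z
    unfolding E_def ff_def hh_def by simp
  have Eint: "set_integrable lborel {0..a} E"
  proof -
    have c1: "continuous_on {0..a} (\<lambda>z. hh (v z))" using cont_hh_comp[OF vc] .
    have i1: "set_integrable lborel {0..a} (\<lambda>z. hh (v z))"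
      unfolding set_integrable_def using borel_integrable_compact[OF compact_Icc c1] by simp
    have i2: "set_integrable lborel {0..a} (\<lambda>z. ff (v z) * (w z)\<^sup>2)"
      unfolding set_integrable_def
    proof (rule Bochner_Integration.integrable_bound)
      show "integrable lborel (\<lambda>x. indicator {0..a} x *\<^sub>R ((K1 + K3) * (w x)\<^sup>2))"
        using set_integrable_mult_right[OF w2int, of "K1 + K3"] unfolding set_integrable_def .
      have m1: "(\<lambda>x. indicator {0..a} x * ff (v x)) \<in> borel_measurable lborel"
        by (rule indicator_cont_meas[OF cont_ff_comp[OF vc]])
      have "(\<lambda>x. (indicator {0..a} x * ff (v x)) * (w x)\<^sup>2) \<in> borel_measurable lborel"
        using m1 wm by measurable
      then show "(\<lambda>x. indicator {0..a} x *\<^sub>R (ff (v x) * (w x)\<^sup>2)) \<in> borel_measurable lborel"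
        by (simp add: mult.assoc)
      show "AE x in lborel. norm (indicator {0..a} x *\<^sub>R (ff (v x) * (w x)\<^sup>2))
              \<le> norm (indicator {0..a} x *\<^sub>R ((K1 + K3) * (w x)\<^sup>2))"
      proof (intro AE_I2)
        fix x
        have "\<bar>ff (v x)\<bar> \<le> \<bar>K1 + K3\<bar>" using ff_le[of "v x"] ff_pos[of "v x"] K1 K3 by simp
        then show "norm (indicator {0..a} x *\<^sub>R (ff (v x) * (w x)\<^sup>2))
              \<le> norm (indicator {0..a} x *\<^sub>R ((K1 + K3) * (w x)\<^sup>2))"
          by (auto simp: indicator_def abs_mult intro: mult_right_mono)
      qed
    qed
    have "set_integrable lborel {0..a} (\<lambda>z. ff (v z) * (w z)\<^sup>2 + hh (v z))"
      using set_integral_add(1)[OF i2 i1] .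
    then show ?thesis unfolding E_eq .
  qed
  have FE: "F_energy K1 K2 K3 t a v w = integral {0..a} E"
    unfolding F_energy_def E_def[symmetric] using set_borel_integral_eq_integral(2)[OF Eint] .
  have EI: "E integrable_on {0..a}" using set_borel_integral_eq_integral(1)[OF Eint] .
  have awi: "(\<lambda>x. \<bar>w x\<bar>) absolutely_integrable_on {0..a}"
    using absolutely_integrable_norm[OF wi] by (simp add: o_def)
  have pc: "continuous_on {0..a} (\<lambda>x. phi \<mu> (v x))"
    using continuous_on_compose2[OF cont_phi[of \<mu> UNIV] vc] \<mu> by auto
  have pwi: "(\<lambda>x. phi \<mu> (v x) * \<bar>w x\<bar>) absolutely_integrable_on {0..a}"
  proof (rule absolutely_integrable_bounded_measurable_product_real[OF _ _ _ awi])
    show "(\<lambda>x. phi \<mu> (v x)) \<in> borel_measurable (lebesgue_on {0..a})"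
      by (rule continuous_imp_measurable_on_sets_lebesgue[OF pc]) simp
    show "bounded ((\<lambda>x. phi \<mu> (v x)) ` {0..a})"
      by (rule compact_imp_bounded[OF compact_continuous_image[OF pc compact_Icc]])
  qed simp
  have pwI: "(\<lambda>x. phi \<mu> (v x) * \<bar>w x\<bar>) integrable_on {0..a}"
    using set_lebesgue_integral_eq_integral(1)[OF pwi] .
  have pt: "E z \<ge> 2 * (phi \<mu> (v z) * \<bar>w z\<bar>) - \<mu>" for z
  proof -
    let ?A = "sqrt (ff (v z))" and ?B = "sqrt (hh (v z) + \<mu>)"
    have A2: "?A\<^sup>2 = ff (v z)" using ff_pos[of "v z"] by simp
    have B2: "?B\<^sup>2 = hh (v z) + \<mu>" using hh_nonneg[of "v z"] \<mu> by simp
    have "0 \<le> (?A * \<bar>w z\<bar> - ?B)\<^sup>2" by simp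
    also have "\<dots> = ?A\<^sup>2 * (w z)\<^sup>2 + ?B\<^sup>2 - 2 * (?A * ?B * \<bar>w z\<bar>)"
      by (simp add: power2_eq_square algebra_simps)
    finally show ?thesis unfolding E_eq phi_def A2 B2 by (simp add: algebra_simps)
  qed
  have "integral {0..a} (\<lambda>z. 2 * (phi \<mu> (v z) * \<bar>w z\<bar>) - \<mu>) \<le> integral {0..a} E"
    using pt EI pwI by (intro integral_le integrable_diff integrable_on_mult_right) auto
  moreover have "integral {0..a} (\<lambda>z. 2 * (phi \<mu> (v z) * \<bar>w z\<bar>) - \<mu>)
      = 2 * integral {0..a} (\<lambda>z. phi \<mu> (v z) * \<bar>w z\<bar>) - \<mu> * a"
    using pwI a by (subst integral_diff) (auto intro: integrable_on_mult_right)
  moreover have "II \<mu> \<le> integral {0..a} (\<lambda>z. phi \<mu> (v z) * \<bar>w z\<bar>)"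
  proof -
    obtain B where B: "\<And>x. x \<in> {0..a} \<Longrightarrow> norm (v x) \<le> B"
      using compact_imp_bounded[OF compact_continuous_image[OF vc compact_Icc]]
      unfolding bounded_iff by (metis imageI)
    define R where "R = max B 2"
    have rng: "v ` {0..a} \<subseteq> {-R..R}" using B unfolding R_def by (force simp: abs_le_iff)
    define \<Phi> where "\<Phi> x = integral {-R..x} (phi \<mu>)" for x
    have \<Phi>d: "(\<Phi> has_real_derivative phi \<mu> s) (at s within {-R..R})" if "s \<in> {-R..R}" for s
      unfolding \<Phi>_def has_real_derivative_iff_has_vector_derivative
      using integral_has_vector_derivative[OF cont_phi that] \<mu> by simp
    have ch: "\<Phi> (v a) - \<Phi> (v 0) \<le> integral {0..a} (\<lambda>x. phi \<mu> (v x) * \<bar>w x\<bar>)"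
      using \<mu> a by (intro chain_ineq[OF _ vc wi vw cont_phi _ rng \<Phi>d]) (auto intro: phi_nonneg)
    have R2: "pi/2 \<le> R" using pi_less_4 unfolding R_def by linarith
    have "integral {-R..0} (phi \<mu>) + integral {0..pi/2} (phi \<mu>) = integral {-R..pi/2} (phi \<mu>)"
      using R2 \<mu> by (intro Henstock_Kurzweil_Integration.integral_combine integrable_continuous_real cont_phi)
        (auto simp: R_def)
    then have "\<Phi> (v a) - \<Phi> (v 0) = II \<mu>" unfolding \<Phi>_def II_def va v0 by simp
    then show ?thesis using ch by simp
  qed
  ultimately show ?thesis unfolding FE by linarith
qed

end


context LC begin

lemma pp_int: "\<mu> > 0 \<Longrightarrow> pp \<mu> integrable_on {a..b}"
  by (intro integrable_continuous_real cont_pp)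

lemma TT_mono: assumes "0 < \<mu>" "\<mu> \<le> \<mu>'" shows "TT \<mu>' \<le> TT \<mu>"
  unfolding TT_def
proof (rule integral_le[OF pp_int pp_int])
  fix s
  have "sqrt (hh s + \<mu>) \<le> sqrt (hh s + \<mu>')" using assms by simp
  moreover have "0 < sqrt (hh s + \<mu>)" using hh_nonneg[of s] assms by simp
  ultimately show "pp \<mu>' s \<le> pp \<mu> s" unfolding pp_def using ff_pos[of s]
    by (intro divide_left_mono) auto
qed (use assms in auto)

lemma TT_cont: "continuous_on {0<..} TT"
proof -
  have "continuous_on ({0<..} \<times> cbox 0 (pi/2)) (\<lambda>x. sqrt (ff (snd x)) / sqrt (hh (snd x) + fst x))"
    using hh_nonneg
    by (intro continuous_intros cont_ff_comp cont_hh_comp continuous_on_snd)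
       (auto simp: add_nonneg_pos less_imp_neq[symmetric])
  then have "continuous_on ({0<..} \<times> cbox 0 (pi/2)) (\<lambda>(\<mu>, s). pp \<mu> s)"
    by (simp add: pp_def case_prod_beta)
  from integral_continuous_on_param[OF this] show ?thesis
    unfolding TT_def by (simp add: cbox_interval)
qed

lemma TT_small: assumes "\<mu> > 0" shows "TT \<mu> \<le> pi/2 * (sqrt (K1 + K3) / sqrt \<mu>)"
proof -
  have "TT \<mu> \<le> integral {0..pi/2} (\<lambda>s. sqrt (K1 + K3) / sqrt \<mu>)"
    unfolding TT_def
  proof (rule integral_le[OF pp_int])
    fix s
    have "sqrt (ff s) \<le> sqrt (K1 + K3)" using ff_le[of s] by simp
    moreover have "sqrt \<mu> \<le> sqrt (hh s + \<mu>)" using hh_nonneg[of s] by simp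
    ultimately show "pp \<mu> s \<le> sqrt (K1 + K3) / sqrt \<mu>" unfolding pp_def using assms K1 K3
      by (intro frac_le) auto
  qed (use assms in auto)
  also have "\<dots> = pi/2 * (sqrt (K1 + K3) / sqrt \<mu>)" by simp
  finally show ?thesis .
qed

lemma log_int:
  fixes a b c X :: real
  assumes a: "a > 0" and b: "b > 0" and X: "X \<ge> 0"
  shows "((\<lambda>s. c / (a * s + b)) has_integral (c * ln (a * X + b) / a - c * ln (a * 0 + b) / a)) {0..X}"
proof (rule fundamental_theorem_of_calculus_interior[OF X])
  have pos: "a * s + b > 0" if "0 \<le> s" for s using a b that by (intro add_nonneg_pos) auto
  show "continuous_on {0..X} (\<lambda>s. c * ln (a * s + b) / a)"
  proof -
    have "\<forall>s\<in>{0..X}. a * s + b \<noteq> 0" using pos by (metis atLeastAtMost_iff less_irrefl)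
    then show ?thesis using a by (intro continuous_intros) auto
  qed
  fix s assume s: "s \<in> {0<..<X}"
  then have p: "a * s + b > 0" using a b by (simp add: add_nonneg_pos)
  have "((\<lambda>s. c * ln (a * s + b) / a) has_real_derivative c * (a / (a * s + b)) / a) (at s)"
    using p by (auto intro!: derivative_eq_intros)
  moreover have "c * (a / (a * s + b)) / a = c / (a * s + b)" using a by simp
  ultimately show "((\<lambda>s. c * ln (a * s + b) / a) has_vector_derivative c / (a * s + b)) (at s)"
    by (simp add: has_real_derivative_iff_has_vector_derivative)
qed

lemma TT_large:
  assumes "\<mu> > 0"
  shows "TT \<mu> \<ge> sqrt (min K1 K3) * ln (sqrt CC * (pi/2) + sqrt \<mu>) / sqrt CC
                - sqrt (min K1 K3) * ln (sqrt \<mu>) / sqrt CC"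
proof -
  let ?a = "sqrt CC" and ?b = "sqrt \<mu>" and ?c = "sqrt (min K1 K3)"
  have a: "?a > 0" using CC_pos by simp
  have b: "?b > 0" using assms by simp
  have hi: "((\<lambda>s. ?c / (?a * s + ?b)) has_integral (?c * ln (?a * (pi/2) + ?b) / ?a - ?c * ln (?a * 0 + ?b) / ?a)) {0..pi/2}"
    using log_int[OF a b, of "pi/2"] by simp
  have "integral {0..pi/2} (\<lambda>s. ?c / (?a * s + ?b)) \<le> TT \<mu>"
    unfolding TT_def
  proof (rule integral_le[OF _ pp_int[OF assms]])
    show "(\<lambda>s. ?c / (?a * s + ?b)) integrable_on {0..pi/2}" using hi by blast
    fix s assume s: "s \<in> {0..pi/2}"
    have s0: "s \<ge> 0" using s by simp
    have "sqrt (min K1 K3) \<le> sqrt (ff s)" using ff_ge[of s] by simp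
    moreover have "sqrt (hh s + \<mu>) \<le> ?a * s + ?b"
    proof -
      have "hh s + \<mu> \<le> (?a * s + ?b)\<^sup>2"
      proof -
        have "(?a * s + ?b)\<^sup>2 = CC * s\<^sup>2 + 2 * ?a * ?b * s + \<mu>"
          using CC_pos assms by (simp add: power2_eq_square algebra_simps)
        moreover have "0 \<le> 2 * ?a * ?b * s" using a b s0 by simp
        ultimately show ?thesis using hh_quad[of s] by linarith
      qed
      then have "sqrt (hh s + \<mu>) \<le> sqrt ((?a * s + ?b)\<^sup>2)" by (rule real_sqrt_le_mono)
      also have "\<dots> = ?a * s + ?b" using a b s0 by simp
      finally show ?thesis .
    qed
    moreover have "0 < sqrt (hh s + \<mu>)" using hh_nonneg[of s] assms by simp
    ultimately show "?c / (?a * s + ?b) \<le> pp \<mu> s" unfolding pp_def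
      using K1 K3 by (intro frac_le) auto
  qed
  then show ?thesis using integral_unique[OF hi] by simp
qed

lemma EX: assumes L: "L > 0" shows "\<exists>\<mu>>0. TT \<mu> = L"
proof -
  let ?a = "sqrt CC" and ?c = "sqrt (min K1 K3)"
  have a: "?a > 0" using CC_pos by simp
  have c: "?c > 0" using K1 K3 by simp
  define b where "b = (?a * (pi/2)) * exp (- (L * ?a / ?c))"
  have b: "b > 0" unfolding b_def using a by simp
  define \<mu>1 where "\<mu>1 = b\<^sup>2"
  have \<mu>1: "\<mu>1 > 0" "sqrt \<mu>1 = b" unfolding \<mu>1_def using b by auto
  have "TT \<mu>1 \<ge> L"
  proof -
    have "ln b = ln (?a * (pi/2)) + ln (exp (- (L * ?a / ?c)))" unfolding b_def using a
      by (subst ln_mult) auto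
    then have lb: "ln b = ln (?a * (pi/2)) - L * ?a / ?c" by simp
    have "ln (?a * (pi/2)) \<le> ln (?a * (pi/2) + b)" using a b by (intro ln_mono) auto
    then have "L * ?a / ?c \<le> ln (?a * (pi/2) + b) - ln b" using lb by simp
    then have "?c * (L * ?a / ?c) / ?a \<le> ?c * (ln (?a * (pi/2) + b) - ln b) / ?a"
      using a c by (intro divide_right_mono mult_left_mono) auto
    moreover have "?c * (L * ?a / ?c) / ?a = L" using a c K1 K3 by simp
    ultimately have "L \<le> ?c * ln (?a * (pi/2) + b) / ?a - ?c * ln b / ?a"
      by (simp add: right_diff_distrib diff_divide_distrib)
    with TT_large[OF \<mu>1(1)] show ?thesis unfolding \<mu>1(2) by linarith
  qed
  define \<mu>2 where "\<mu>2 = (pi/2 * sqrt (K1 + K3) / L)\<^sup>2"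
  have q: "pi/2 * sqrt (K1 + K3) / L > 0" using K1 K3 L by simp
  have "sqrt \<mu>2 = \<bar>pi/2 * sqrt (K1 + K3) / L\<bar>" unfolding \<mu>2_def by (rule real_sqrt_abs)
  then have \<mu>2: "\<mu>2 > 0" "sqrt \<mu>2 = pi/2 * sqrt (K1 + K3) / L"
    using abs_of_pos[OF q] q unfolding \<mu>2_def by auto
  have "TT \<mu>2 \<le> L"
  proof -
    have "pi/2 * (sqrt (K1 + K3) / sqrt \<mu>2) = L" unfolding \<mu>2(2) using K1 K3 L by simp
    then show ?thesis using TT_small[OF \<mu>2(1)] by simp
  qed
  show ?thesis
  proof (cases "\<mu>1 \<le> \<mu>2")
    case True
    have "continuous_on {\<mu>1..\<mu>2} TT"
      by (rule continuous_on_subset[OF TT_cont]) (use \<mu>1 in auto)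
    then obtain x where "\<mu>1 \<le> x" "x \<le> \<mu>2" "TT x = L"
      using IVT2'[of TT \<mu>2 L \<mu>1] True \<open>TT \<mu>1 \<ge> L\<close> \<open>TT \<mu>2 \<le> L\<close> by auto
    then show ?thesis using \<mu>1(1) by (intro exI[of _ x]) auto
  next
    case False
    then have "TT \<mu>1 \<le> TT \<mu>2" using TT_mono[OF \<mu>2(1)] by simp
    then have "TT \<mu>2 = L" using \<open>TT \<mu>1 \<ge> L\<close> \<open>TT \<mu>2 \<le> L\<close> by simp
    then show ?thesis using \<mu>2 by auto
  qed
qed

end


context LC begin

lemma inv_pp_sq: "\<mu> > 0 \<Longrightarrow> ff s * (inverse (pp \<mu> s))\<^sup>2 = hh s + \<mu>"
  using ff_pos[of s] hh_nonneg[of s]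
  by (simp add: pp_def power_inverse power_divide field_simps)

lemma phi_inv_pp: "\<mu> > 0 \<Longrightarrow> phi \<mu> s * inverse (pp \<mu> s) = hh s + \<mu>"
proof -
  assume m: "\<mu> > 0"
  have a: "sqrt (ff s) > 0" using ff_pos[of s] by simp
  have b: "sqrt (hh s + \<mu>) > 0" using hh_nonneg[of s] m by simp
  have "phi \<mu> s * inverse (pp \<mu> s) = (sqrt (hh s + \<mu>))\<^sup>2"
    unfolding phi_def pp_def using a b by (simp add: field_simps power2_eq_square)
  also have "\<dots> = hh s + \<mu>" using hh_nonneg[of s] m by simp
  finally show ?thesis .
qed

lemma CON:
  assumes L: "L > 0" and \<mu>: "\<mu> > 0" and T: "TT \<mu> = L"
  shows "\<exists>v w. (v, w) \<in> admissible L \<and> F_energy K1 K2 K3 t L v w = 2 * II \<mu> - \<mu> * L"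
proof -
  define z where "z s = integral {0..s} (pp \<mu>)" for s
  define c0 where "c0 = sqrt (min K1 K3) / sqrt (K2 * t\<^sup>2 + \<mu>)"
  have c0: "c0 > 0" unfolding c0_def using K1 K3 K2 \<mu> by (simp add: add_nonneg_pos)
  have c0le: "c0 \<le> pp \<mu> s" for s
    unfolding c0_def pp_def
    using ff_ge[of s] hh_le[of s] hh_nonneg[of s] \<mu> K1 K3 by (intro frac_le) auto
  have Zd: "z s' - z s \<ge> c0 * (s' - s)" if "0 \<le> s" "s \<le> s'" for s s'
  proof -
    have "integral {0..s} (pp \<mu>) + integral {s..s'} (pp \<mu>) = integral {0..s'} (pp \<mu>)"
      using that \<mu> by (intro Henstock_Kurzweil_Integration.integral_combine pp_int) auto
    moreover have "integral {s..s'} (\<lambda>_. c0) \<le> integral {s..s'} (pp \<mu>)"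
      using c0le \<mu> by (intro integral_le pp_int) auto
    ultimately show ?thesis unfolding z_def using that by (simp add: mult.commute)
  qed
  have Zs: "z s < z s'" if "0 \<le> s" "s < s'" for s s'
    using Zd[of s s'] that c0 by (smt (verit) mult_pos_pos)
  have Zc: "continuous_on {0..pi/2} z"
    unfolding z_def using \<mu> by (intro indefinite_integral_continuous_1 pp_int)
  have Z0: "z 0 = 0" unfolding z_def by simp
  have ZL: "z (pi/2) = L" unfolding z_def using T TT_def by simp
  have Zder: "(z has_real_derivative pp \<mu> s) (at s)" if "s \<in> {0<..<pi/2}" for s
  proof -
    have "(z has_vector_derivative pp \<mu> s) (at s within {0..pi/2})"
      unfolding z_def using that \<mu> by (intro integral_has_vector_derivative cont_pp) auto
    then show ?thesis using that
      by (simp add: at_within_Icc_at has_real_derivative_iff_has_vector_derivative)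
  qed
  have Zr: "z s \<in> {0..L}" if "s \<in> {0..pi/2}" for s
  proof -
    have "z 0 \<le> z s" using Zs[of 0 s] that by (cases "s = 0") auto
    moreover have "z s \<le> z (pi/2)"
    proof (cases "s < pi/2")
      case True then show ?thesis using Zs[of s "pi/2"] that by auto
    next
      case False then have "s = pi/2" using that by auto
      then show ?thesis by (simp only: order_refl)
    qed
    ultimately show ?thesis using Z0 ZL by auto
  qed
  have uniq: "s = s'" if "s \<in> {0..pi/2}" "s' \<in> {0..pi/2}" "z s = z s'" for s s'
    using Zs[of s s'] Zs[of s' s] that by (metis atLeastAtMost_iff linorder_neqE_linordered_idom order_less_irrefl)
  define v where "v x = (THE s. s \<in> {0..pi/2} \<and> z s = x)" for x
  have ex1: "\<exists>!s. s \<in> {0..pi/2} \<and> z s = x" if x: "x \<in> {0..L}" for x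
  proof -
    have "\<exists>s. 0 \<le> s \<and> s \<le> pi/2 \<and> z s = x"
      using IVT'[of z 0 x "pi/2"] x Z0 ZL Zc by auto
    then obtain s where "0 \<le> s" "s \<le> pi/2" "z s = x" by blast
    then show ?thesis using uniq by auto
  qed
  have V1: "v x \<in> {0..pi/2} \<and> z (v x) = x" if "x \<in> {0..L}" for x
    unfolding v_def using theI'[OF ex1[OF that]] .
  have V2: "v (z s) = s" if "s \<in> {0..pi/2}" for s
    unfolding v_def using that uniq by (intro the_equality) auto
  have img: "z ` {0..pi/2} = {0..L}"
  proof
    show "z ` {0..pi/2} \<subseteq> {0..L}" using Zr by auto
    show "{0..L} \<subseteq> z ` {0..pi/2}"
    proof
      fix x assume "x \<in> {0..L}"
      then show "x \<in> z ` {0..pi/2}" using V1[of x] by (metis image_eqI)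
    qed
  qed
  have Vc: "continuous_on {0..L} v"
    using continuous_on_inv[OF Zc compact_Icc, of v] V2 img by auto
  have V0: "v 0 = 0" using V2[of 0] Z0 by simp
  have VL: "v L = pi/2" using V2[of "pi/2"] ZL by simp
  have V5: "v x \<in> {0<..<pi/2}" if "x \<in> {0<..<L}" for x
  proof -
    have "v x \<in> {0..pi/2}" "z (v x) = x" using V1[of x] that by auto
    moreover have "v x \<noteq> 0" using Z0 that \<open>z (v x) = x\<close> by auto
    moreover have "v x \<noteq> pi/2"
    proof
      assume h: "v x = pi/2"
      have "x = L" using \<open>z (v x) = x\<close> ZL h by metis
      then show False using that by auto
    qed
    ultimately show ?thesis by auto
  qed
  have V6: "(v has_real_derivative inverse (pp \<mu> (v x))) (at x)" if x: "x \<in> {0<..<L}" for x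
  proof (rule DERIV_inverse_function[where a=0 and b=L])
    show "(z has_real_derivative pp \<mu> (v x)) (at (v x))" using Zder V5[OF x] .
    show "pp \<mu> (v x) \<noteq> 0" using pp_pos[OF \<mu>] by (simp add: less_imp_neq[symmetric])
    show "0 < x" "x < L" using x by auto
    show "z (v y) = y" if "0 < y" "y < L" for y using V1[of y] that by auto
    show "isCont v x" using continuous_on_interior[OF Vc] x by simp
  qed
  define G where "G s = inverse (pp \<mu> s)" for s
  have Gc: "continuous_on UNIV G"
    unfolding G_def using pp_pos[OF \<mu>]
    by (intro continuous_on_inverse[OF cont_pp[OF \<mu>]]) (auto simp: less_imp_neq[symmetric])
  have GVc: "continuous_on {0..L} (\<lambda>x. G (v x))"
    by (rule continuous_on_compose2[OF Gc Vc]) auto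
  define w where "w x = indicator {0..L} x * G (v x)" for x
  have w_on: "w x = G (v x)" if "x \<in> {0..L}" for x using that unfolding w_def by simp
  have "continuous_on {0..L} w = continuous_on {0..L} (\<lambda>x. G (v x))"
    by (rule continuous_on_cong) (auto simp: w_on)
  then have wc: "continuous_on {0..L} w" using GVc by simp
  have wint: "set_integrable lborel {0..L} w"
    unfolding set_integrable_def using borel_integrable_compact[OF compact_Icc wc] .
  have w2int: "set_integrable lborel {0..L} (\<lambda>x. (w x)\<^sup>2)"
    unfolding set_integrable_def using borel_integrable_compact[OF compact_Icc continuous_on_power[OF wc]] .
  have wm: "w \<in> borel_measurable lborel"
    using indicator_cont_meas[OF GVc] unfolding w_def .
  have vw: "v x = v 0 + (LINT y:{0..x}|lborel. w y)" if x: "x \<in> {0..L}" for x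
  proof -
    have "(w has_integral (v x - v 0)) {0..x}"
    proof (rule fundamental_theorem_of_calculus_interior)
      show "0 \<le> x" using x by simp
      show "continuous_on {0..x} v" by (rule continuous_on_subset[OF Vc]) (use x in auto)
      fix y assume y: "y \<in> {0<..<x}"
      then have "y \<in> {0<..<L}" using x by auto
      from V6[OF this] have "(v has_real_derivative w y) (at y)"
        using w_on[of y] y x unfolding G_def by auto
      then show "(v has_vector_derivative w y) (at y)"
        by (simp add: has_real_derivative_iff_has_vector_derivative)
    qed
    then have "integral {0..x} w = v x - v 0" by (rule integral_unique)
    moreover have "(LINT y:{0..x}|lborel. w y) = integral {0..x} w"
      using lborel_conv[OF wint, of x] x by simp
    ultimately show ?thesis by simp
  qed
  have adm: "(v, w) \<in> admissible L"
    unfolding admissible_def W12_pair_def using Vc wm wint w2int vw V0 VL by auto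
  have hvc: "continuous_on {0..L} (\<lambda>x. 2 * hh (v x) + \<mu>)"
    by (intro continuous_on_add continuous_on_mult continuous_on_const cont_hh_comp[OF Vc])
  have Eq: "F_energy K1 K2 K3 t L v w = integral {0..L} (\<lambda>x. 2 * hh (v x) + \<mu>)"
  proof -
    have "F_energy K1 K2 K3 t L v w = (LINT x:{0..L}|lborel. 2 * hh (v x) + \<mu>)"
      unfolding F_energy_def
    proof (rule set_lebesgue_integral_cong)
      show "\<forall>x. x \<in> {0..L} \<longrightarrow> f_coef K1 K3 (v x) * (w x)\<^sup>2 - g_coef K2 K3 t (v x) + K2 * t\<^sup>2
               = 2 * hh (v x) + \<mu>"
        using w_on inv_pp_sq[OF \<mu>] unfolding G_def ff_def hh_def by auto
    qed simp
    also have "\<dots> = integral {0..L} (\<lambda>x. 2 * hh (v x) + \<mu>)"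
      using set_borel_integral_eq_integral(2)[of "{0..L}" "\<lambda>x. 2 * hh (v x) + \<mu>"]
        borel_integrable_compact[OF compact_Icc hvc]
      unfolding set_integrable_def by simp
    finally show ?thesis .
  qed
  define \<Phi> where "\<Phi> u = integral {0..u} (phi \<mu>)" for u
  have \<Phi>c: "continuous_on {0..pi/2} \<Phi>"
    unfolding \<Phi>_def using \<mu> by (intro indefinite_integral_continuous_1 integrable_continuous_real cont_phi) auto
  have HI: "((\<lambda>x. hh (v x) + \<mu>) has_integral (\<Phi> (v L) - \<Phi> (v 0))) {0..L}"
  proof (rule fundamental_theorem_of_calculus_interior)
    show "0 \<le> L" using L by simp
    show "continuous_on {0..L} (\<lambda>x. \<Phi> (v x))"
      by (rule continuous_on_compose2[OF \<Phi>c Vc]) (use V1 in auto)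
    fix x assume x: "x \<in> {0<..<L}"
    have vx: "v x \<in> {0<..<pi/2}" using V5[OF x] .
    have "(\<Phi> has_vector_derivative phi \<mu> (v x)) (at (v x) within {0..pi/2})"
      unfolding \<Phi>_def using vx \<mu> by (intro integral_has_vector_derivative cont_phi) auto
    then have d1: "(\<Phi> has_real_derivative phi \<mu> (v x)) (at (v x))" using vx
      by (simp add: at_within_Icc_at has_real_derivative_iff_has_vector_derivative)
    have "((\<lambda>x. \<Phi> (v x)) has_real_derivative phi \<mu> (v x) * inverse (pp \<mu> (v x))) (at x)"
      using DERIV_chain2[OF d1 V6[OF x]] .
    then show "((\<lambda>x. \<Phi> (v x)) has_vector_derivative hh (v x) + \<mu>) (at x)"
      unfolding phi_inv_pp[OF \<mu>] by (simp add: has_real_derivative_iff_has_vector_derivative)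
  qed
  have "\<Phi> (v L) - \<Phi> (v 0) = II \<mu>" unfolding VL V0 \<Phi>_def II_def by simp
  with HI have HI': "((\<lambda>x. hh (v x) + \<mu>) has_integral II \<mu>) {0..L}" by simp
  have "((\<lambda>x. 2 * (hh (v x) + \<mu>) - \<mu>) has_integral (2 * II \<mu> - \<mu> * L)) {0..L}"
    using has_integral_diff[OF has_integral_mult_right[OF HI', of 2] has_integral_const_real[of \<mu> 0 L]] L
    by (simp add: mult.commute)
  then have "integral {0..L} (\<lambda>x. 2 * hh (v x) + \<mu>) = 2 * II \<mu> - \<mu> * L"
    by (simp add: algebra_simps integral_unique)
  then show ?thesis using adm Eq by (intro exI[of _ v] exI[of _ w]) simp
qed

end


theorem mainTheorem2:
  fixes K1 K2 K3 t \<alpha> \<beta> :: real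
  assumes "K1 > 0" "K2 > 0" "K3 > 0" "t \<ge> 0"
    and "0 < \<alpha>" "\<alpha> < \<beta>"
  shows "inf_energy K1 K2 K3 t \<alpha> > inf_energy K1 K2 K3 t \<beta>"
proof -
  interpret LC K1 K2 K3 t using assms by unfold_locales auto
  have a: "\<alpha> > 0" and b: "\<beta> > 0" using assms by auto
  obtain \<mu> where \<mu>: "\<mu> > 0" "TT \<mu> = \<beta>" using EX[OF b] by auto
  obtain v w where vw: "(v, w) \<in> admissible \<beta>" "F_energy K1 K2 K3 t \<beta> v w = 2 * II \<mu> - \<mu> * \<beta>"
    using CON[OF b \<mu>] by auto
  let ?S = "\<lambda>a. (\<lambda>(v, w). F_energy K1 K2 K3 t a v w) ` admissible a"
  have bdd: "bdd_below (?S \<beta>)"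
    unfolding bdd_below_def using LB[OF _ b \<mu>(1)] by fast
  have "F_energy K1 K2 K3 t \<beta> v w \<in> ?S \<beta>" using vw(1) by force
  then have 1: "inf_energy K1 K2 K3 t \<beta> \<le> 2 * II \<mu> - \<mu> * \<beta>"
    unfolding inf_energy_def using cInf_lower[OF _ bdd] vw(2) by metis
  obtain \<mu>' where \<mu>': "\<mu>' > 0" "TT \<mu>' = \<alpha>" using EX[OF a] by auto
  obtain v' w' where "(v', w') \<in> admissible \<alpha>"
    using CON[OF a \<mu>'] by auto
  then have ne: "?S \<alpha> \<noteq> {}" by auto
  have 2: "2 * II \<mu> - \<mu> * \<alpha> \<le> inf_energy K1 K2 K3 t \<alpha>"
    unfolding inf_energy_def
    by (rule cInf_greatest[OF ne]) (use LB[OF _ a \<mu>(1)] in auto)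
  have "\<mu> * \<alpha> < \<mu> * \<beta>" using \<mu>(1) assms by simp
  then show ?thesis using 1 2 by linarith
qed


end
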